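(* $\phi(x_0)=-1$.
   Context: Variables $x_i$, $i\in\mathbb{Z}$, commute. A signed graph is a finite graph (loops and multiple edges allowed) with $\mathrm{sgn}:E\to\{+,-\}$; a coloring $\kappa:V\to\mathbb{Z}$ is proper if $\kappa(u)\ne\mathrm{sgn}(e)\kappa(v)$ for every edge $e$ with endpoints $u,v$. An orientation assigns to each half-edge (a loop has two) an arrow toward or away from the vertex, such that on a positive edge exactly one of the two arrows points toward its vertex and on a negative edge both point toward or both point away. A cycle is a closed walk in which, considering only the edges of the walk, every vertex of the walk has at least one arrow pointing into it and one pointing out of it; an orientation is acyclic if it has no cycle; a sink is a vertex all of whose incident arrows point toward it (an isolated vertex is a sink). A signed poset is an acyclic orientation $P$ of a signed graph. A proper coloring $\kappa$ preserves $P$ if for every edge $e$ and each endpoint $v$ of $e$, with $u$ the other endpoint ($u=v$ for a loop), the arrow of $P$ at the incidence of $e$ with $v$ points toward $v$ iff $\kappa(v)>\mathrm{sgn}(e)\kappa(u)$. $Y_P=\sum_\kappa\prod_v x_{\kappa(v)}$ over proper colorings preserving $P$; $\mathbb{Y}$ is the $\mathbb{Q}$-span of all $Y_P$ (it is closed under products and contains $x_0$). $\phi:\mathbb{Y}\to\mathbb{Q}[t]$ is the (unique) $\mathbb{Q}$-linear map with $\phi(Y_P)=t^{\mathrm{sink}(P)}$, $\mathrm{sink}(P)$ the number of sinks of $P$ (its existence is established in the paper). *)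

theory Defs
  imports Main "HOL-Library.Multiset" "HOL-Computational_Algebra.Polynomial"
begin

text \<open>A signed graph with an assignment of arrows to half-edges.  Components:
  V (vertex set), E (edge set), ends e = (u,v) the two endpoints of e
  (u = v for a loop), sg e = True iff e is positive, and
  arr e b = True iff the arrow on the half-edge of e at side b points toward
  its vertex (side False is at fst (ends e), side True at snd (ends e)).\<close>

type_synonym sgo =
  "nat set \<times> nat set \<times> (nat \<Rightarrow> nat \<times> nat) \<times> (nat \<Rightarrow> bool) \<times> (nat \<Rightarrow> bool \<Rightarrow> bool)"

definition sg_V :: "sgo \<Rightarrow> nat set" where "sg_V P = fst P"
definition sg_E :: "sgo \<Rightarrow> nat set" where "sg_E P = fst (snd P)"
definition sg_ends :: "sgo \<Rightarrow> nat \<Rightarrow> nat \<times> nat" where "sg_ends P = fst (snd (snd P))"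
definition sg_pos :: "sgo \<Rightarrow> nat \<Rightarrow> bool" where "sg_pos P = fst (snd (snd (snd P)))"
definition sg_arr :: "sgo \<Rightarrow> nat \<Rightarrow> bool \<Rightarrow> bool" where "sg_arr P = snd (snd (snd (snd P)))"

definition endpt :: "sgo \<Rightarrow> nat \<Rightarrow> bool \<Rightarrow> nat" where
  "endpt P e b = (if b then snd (sg_ends P e) else fst (sg_ends P e))"

definition sign_mult :: "sgo \<Rightarrow> nat \<Rightarrow> int \<Rightarrow> int" where
  "sign_mult P e k = (if sg_pos P e then k else - k)"

definition oriented_signed_graph :: "sgo \<Rightarrow> bool" where
  "oriented_signed_graph P \<longleftrightarrow>
     finite (sg_V P) \<and> finite (sg_E P) \<and>
     (\<forall>e\<in>sg_E P. endpt P e False \<in> sg_V P \<and> endpt P e True \<in> sg_V P) \<and>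
     (\<forall>e\<in>sg_E P. if sg_pos P e then sg_arr P e False \<noteq> sg_arr P e True
                                else sg_arr P e False = sg_arr P e True)"

definition closed_walk :: "sgo \<Rightarrow> nat list \<Rightarrow> nat list \<Rightarrow> bool" where
  "closed_walk P vs es \<longleftrightarrow> es \<noteq> [] \<and> length vs = length es \<and>
     (\<forall>i<length es. es!i \<in> sg_E P \<and>
        {endpt P (es!i) False, endpt P (es!i) True} = {vs!i, vs!((i+1) mod length es)})"

definition is_cycle :: "sgo \<Rightarrow> nat list \<Rightarrow> nat list \<Rightarrow> bool" where
  "is_cycle P vs es \<longleftrightarrow> closed_walk P vs es \<and>
     (\<forall>v\<in>set vs.
        (\<exists>e\<in>set es. \<exists>b. endpt P e b = v \<and> sg_arr P e b) \<and>
        (\<exists>e\<in>set es. \<exists>b. endpt P e b = v \<and> \<not> sg_arr P e b))"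

definition signed_poset :: "sgo \<Rightarrow> bool" where
  "signed_poset P \<longleftrightarrow> oriented_signed_graph P \<and> \<not> (\<exists>vs es. is_cycle P vs es)"

definition is_sink :: "sgo \<Rightarrow> nat \<Rightarrow> bool" where
  "is_sink P v \<longleftrightarrow> (\<forall>e\<in>sg_E P. \<forall>b. endpt P e b = v \<longrightarrow> sg_arr P e b)"

definition num_sinks :: "sgo \<Rightarrow> nat" where
  "num_sinks P = card {v \<in> sg_V P. is_sink P v}"

definition proper_col :: "sgo \<Rightarrow> (nat \<Rightarrow> int) \<Rightarrow> bool" where
  "proper_col P \<kappa> \<longleftrightarrow>
     (\<forall>e\<in>sg_E P. \<kappa> (endpt P e False) \<noteq> sign_mult P e (\<kappa> (endpt P e True)))"

definition preserves :: "sgo \<Rightarrow> (nat \<Rightarrow> int) \<Rightarrow> bool" where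
  "preserves P \<kappa> \<longleftrightarrow>
     (\<forall>e\<in>sg_E P. \<forall>b. sg_arr P e b \<longleftrightarrow>
         \<kappa> (endpt P e b) > sign_mult P e (\<kappa> (endpt P e (\<not> b))))"

text \<open>Y_P as a formal series in commuting variables x_i (i in Z): the coefficient of the
  monomial prod_{i} x_i^(count m i), for m an int multiset.  Colorings are functions
  V -> Z, represented as extensional functions (value 0 off V).\<close>
definition Ycoeff :: "sgo \<Rightarrow> int multiset \<Rightarrow> rat" where
  "Ycoeff P m = of_nat (card {\<kappa>. (\<forall>v. v \<notin> sg_V P \<longrightarrow> \<kappa> v = 0) \<and> proper_col P \<kappa> \<and>
        preserves P \<kappa> \<and> image_mset \<kappa> (mset_set (sg_V P)) = m})"

definition x0_coeff :: "int multiset \<Rightarrow> rat" where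
  "x0_coeff m = (if m = {#0#} then 1 else 0)"

end

theory Submission
  imports Defs
begin

definition is_source :: "sgo \<Rightarrow> nat \<Rightarrow> bool" where
  "is_source P v \<longleftrightarrow> (\<forall>e\<in>sg_E P. \<forall>b. endpt P e b = v \<longrightarrow> \<not> sg_arr P e b)"
definition sinkset :: "sgo \<Rightarrow> nat set" where "sinkset P = {v\<in>sg_V P. is_sink P v}"
definition srcset :: "sgo \<Rightarrow> nat set" where "srcset P = {v\<in>sg_V P. is_source P v}"
definition delv :: "sgo \<Rightarrow> nat set \<Rightarrow> sgo" where
  "delv P X = (sg_V P - X, {e\<in>sg_E P. endpt P e False \<notin> X \<and> endpt P e True \<notin> X},
     sg_ends P, sg_pos P, sg_arr P)"

lemma delv_simps[simp]:
  "sg_V (delv P X) = sg_V P - X"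
  "sg_E (delv P X) = {e\<in>sg_E P. endpt P e False \<notin> X \<and> endpt P e True \<notin> X}"
  "sg_ends (delv P X) = sg_ends P" "sg_pos (delv P X) = sg_pos P" "sg_arr (delv P X) = sg_arr P"
  by (simp_all add: delv_def sg_V_def sg_E_def sg_ends_def sg_pos_def sg_arr_def)

lemma endpt_delv1: "endpt (delv P X) e b = endpt P e b"
  by (simp add: endpt_def delv_def sg_ends_def)

lemma endpt_delv[simp]: "endpt (delv P X) = endpt P"
  by (intro ext) (simp add: endpt_delv1)

lemma endpt_in_V: "oriented_signed_graph P \<Longrightarrow> e \<in> sg_E P \<Longrightarrow> endpt P e b \<in> sg_V P"
  unfolding oriented_signed_graph_def by (cases b) auto

lemma sign_mult_delv[simp]: "sign_mult (delv P X) = sign_mult P"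
  by (simp add: sign_mult_def[abs_def])

lemma delv_empty[simp]: "delv P {} = P"
  by (cases P) (simp add: delv_def sg_V_def sg_E_def sg_ends_def sg_pos_def sg_arr_def)

lemma is_cycle_delv: "is_cycle (delv P X) vs es \<Longrightarrow> is_cycle P vs es"
  unfolding is_cycle_def closed_walk_def by auto

lemma signed_poset_delv: "signed_poset P \<Longrightarrow> signed_poset (delv P X)"
proof -
  assume sp: "signed_poset P"
  have "oriented_signed_graph (delv P X)" using sp
    unfolding signed_poset_def oriented_signed_graph_def by auto
  moreover have "\<not> (\<exists>vs es. is_cycle (delv P X) vs es)"
    using sp is_cycle_delv unfolding signed_poset_def by blast
  ultimately show ?thesis unfolding signed_poset_def by blast
qed

lemma exists_sink_xor_source:
  assumes sp: "signed_poset P" and ne: "sg_E P \<noteq> {}"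
  shows "\<exists>v\<in>sg_V P. (is_sink P v \<and> \<not> is_source P v) \<or> (is_source P v \<and> \<not> is_sink P v)"
proof (rule ccontr)
  assume H: "\<not> ?thesis"
  define Hs where "Hs = sg_E P \<times> (UNIV::bool set)"
  define vt where "vt = (\<lambda>h. endpt P (fst h) (snd h))"
  define ar where "ar = (\<lambda>h. sg_arr P (fst h) (snd h))"
  have fin: "finite Hs" using sp by (simp add: Hs_def signed_poset_def oriented_signed_graph_def)
  have opp: "\<exists>h'. h'\<in>Hs \<and> vt h' = vt h \<and> ar h' = (\<not> ar h)" if h: "h \<in> Hs" for h
  proof -
    have v: "vt h \<in> sg_V P" using sp h endpt_in_V
      by (cases h) (auto simp: Hs_def vt_def signed_poset_def)
    have "\<not> is_sink P (vt h) \<or> \<not> is_source P (vt h)" using h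
      by (cases h) (auto simp: Hs_def vt_def is_sink_def is_source_def)
    with H v have "\<not> is_sink P (vt h) \<and> \<not> is_source P (vt h)" by blast
    then show ?thesis
      by (cases "ar h") (auto simp: is_sink_def is_source_def Hs_def vt_def ar_def)
  qed
  define ch where "ch = (\<lambda>h. SOME h'. h'\<in>Hs \<and> vt h' = vt h \<and> ar h' = (\<not> ar h))"
  have ch: "ch h \<in> Hs \<and> vt (ch h) = vt h \<and> ar (ch h) = (\<not> ar h)" if "h \<in> Hs" for h
    unfolding ch_def using someI_ex[OF opp[OF that]] .
  define nx where "nx = (\<lambda>h. (fst (ch h), \<not> snd (ch h)))"
  have nxH: "nx h \<in> Hs" if "h \<in> Hs" for h using ch[OF that] by (auto simp: nx_def Hs_def)
  obtain e0 where e0: "e0 \<in> sg_E P" using ne by blast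
  define s where "s = (\<lambda>k. (nx ^^ k) (e0, True))"
  have sH: "s k \<in> Hs" for k
    by (induction k) (auto simp: s_def Hs_def e0 intro!: nxH[simplified Hs_def])
  have sS: "s (Suc k) = nx (s k)" for k by (simp add: s_def)
  have "\<not> inj_on s {..card Hs}"
  proof
    assume "inj_on s {..card Hs}"
    then have "card (s ` {..card Hs}) = card Hs + 1" by (simp add: card_image)
    moreover have "card (s ` {..card Hs}) \<le> card Hs"
      using sH fin by (intro card_mono) auto
    ultimately show False by simp
  qed
  then obtain i j where ij: "i < j" "s i = s j"
    unfolding inj_on_def by (metis linorder_neqE_nat)
  define L where "L = j - i"
  have L0: "L > 0" using ij by (simp add: L_def)
  have sj: "s (i + L) = s i" using ij by (simp add: L_def)
  define vs where "vs = map (\<lambda>k. vt (s (i+k))) [0..<L]"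
  define es where "es = map (\<lambda>k. fst (s (i+k+1))) [0..<L]"
  have lens: "length vs = L" "length es = L" by (simp_all add: vs_def es_def)
  have vsk: "vs ! k = vt (s (i+k))" if "k < L" for k using that by (simp add: vs_def)
  have esk: "es ! k = fst (ch (s (i+k)))" if "k < L" for k
    using that by (simp add: es_def sS nx_def)
  have nxt: "s (i + Suc k) = (fst (ch (s (i+k))), \<not> snd (ch (s (i+k))))" for k
    by (simp add: sS nx_def)
  have wrap: "s (i + ((k+1) mod L)) = s (i + Suc k)" if "k < L" for k
  proof (cases "k + 1 < L")
    case True then show ?thesis by simp
  next
    case False
    then have "k + 1 = L" using that by simp
    then show ?thesis using sj by simp
  qed
  have cw: "closed_walk P vs es"
    unfolding closed_walk_def
  proof (intro conjI allI impI)
    show "es \<noteq> []" using lens L0 by auto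
    show "length vs = length es" using lens by simp
  next
    fix k assume k: "k < length es"
    then have kL: "k < L" using lens by simp
    obtain e' b' where c: "ch (s (i+k)) = (e', b')" by fastforce
    have cc: "ch (s (i+k)) \<in> Hs \<and> vt (ch (s (i+k))) = vt (s (i+k))" using ch[OF sH] by blast
    show "es ! k \<in> sg_E P" using cc c esk[OF kL] by (simp add: Hs_def)
    have e1: "endpt P e' b' = vs ! k" using cc c vsk[OF kL] by (simp add: vt_def)
    have e2: "endpt P e' (\<not> b') = vs ! ((k + 1) mod length es)"
      using wrap[OF kL] nxt[of k] c lens kL vsk[of "(k+1) mod L"] L0 by (simp add: vt_def)
    show "{endpt P (es ! k) False, endpt P (es ! k) True} = {vs ! k, vs ! ((k + 1) mod length es)}"
      using e1 e2 esk[OF kL] c by (cases b') auto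
  qed
  have cyc: "is_cycle P vs es"
    unfolding is_cycle_def
  proof (intro conjI cw ballI)
    fix v assume "v \<in> set vs"
    then obtain k where kL: "k < L" and v: "v = vt (s (i+k))" using lens by (auto simp: vs_def)
    define h where "h = s (i+k)"
    have hH: "h \<in> Hs" using sH by (simp add: h_def)
    have c1: "fst (ch h) \<in> set es" using esk[OF kL] lens kL h_def by (metis nth_mem)
    have c0: "fst h \<in> set es"
    proof (cases k)
      case 0
      have "s i = s (i + Suc (L - 1))" using sj L0 by simp
      then have "fst h = es ! (L - 1)" using 0 esk[of "L-1"] L0 nxt[of "L-1"] by (simp add: h_def)
      then show ?thesis using lens L0 by (metis diff_less less_one nth_mem)
    next
      case (Suc k')
      then have "fst h = es ! k'" using esk[of k'] kL nxt[of k'] by (simp add: h_def)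
      then show ?thesis using lens kL Suc by (metis Suc_lessD nth_mem)
    qed
    have vh: "endpt P (fst h) (snd h) = v" by (simp add: v h_def vt_def)
    have vc: "endpt P (fst (ch h)) (snd (ch h)) = v" using ch[OF hH] by (simp add: v h_def vt_def)
    have ac: "sg_arr P (fst (ch h)) (snd (ch h)) = (\<not> sg_arr P (fst h) (snd h))"
      using ch[OF hH] by (simp add: ar_def)
    show "\<exists>e\<in>set es. \<exists>b. endpt P e b = v \<and> sg_arr P e b"
      using c0 c1 vh vc ac by (cases "sg_arr P (fst h) (snd h)") blast+
    show "\<exists>e\<in>set es. \<exists>b. endpt P e b = v \<and> \<not> sg_arr P e b"
      using c0 c1 vh vc ac by (cases "sg_arr P (fst h) (snd h)") blast+
  qed
  then show False using sp by (auto simp: signed_poset_def)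
qed

definition Col :: "sgo \<Rightarrow> int \<Rightarrow> (nat \<Rightarrow> int) set" where
  "Col P k = {\<kappa>. (\<forall>v. v \<notin> sg_V P \<longrightarrow> \<kappa> v = 0) \<and> proper_col P \<kappa> \<and> preserves P \<kappa> \<and>
                 (\<forall>v\<in>sg_V P. \<bar>\<kappa> v\<bar> \<le> k)}"

definition prs :: "sgo \<Rightarrow> (nat set \<times> nat set) set" where
  "prs P = Sigma (Pow (sinkset P)) (\<lambda>A. Pow (srcset P - A))"

fun Fh :: "sgo \<Rightarrow> nat \<Rightarrow> rat" where
  "Fh P 0 = (-1) ^ card (sg_V P)"
| "Fh P (Suc K) = of_nat (card (Col P (int K)))"

definition Gh :: "sgo \<Rightarrow> rat \<Rightarrow> rat \<Rightarrow> nat \<Rightarrow> rat" where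
  "Gh P a b j = (\<Sum>p\<in>prs P. a ^ card (fst p) * b ^ card (snd p) * Fh (delv P (fst p \<union> snd p)) j)"

definition WC :: "sgo \<Rightarrow> int \<Rightarrow> rat \<Rightarrow> rat \<Rightarrow> rat" where
  "WC P k a b = (\<Sum>\<kappa>\<in>Col P k. a ^ card {v\<in>sg_V P. \<kappa> v = k} * b ^ card {v\<in>sg_V P. \<kappa> v = - k})"

lemma finite_Col: "finite (sg_V P) \<Longrightarrow> finite (Col P k)"
proof -
  assume f: "finite (sg_V P)"
  have "Col P k \<subseteq> {f. \<forall>x. (x \<in> sg_V P \<longrightarrow> f x \<in> {-k..k}) \<and> (x \<notin> sg_V P \<longrightarrow> f x = 0)}"
    by (auto simp: Col_def abs_le_iff)
  moreover have "finite {f. \<forall>x. (x \<in> sg_V P \<longrightarrow> f x \<in> {-k..k}) \<and> (x \<notin> sg_V P \<longrightarrow> f x = (0::int))}"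
    by (rule finite_set_of_finite_funs) (use f in auto)
  ultimately show ?thesis by (rule finite_subset)
qed

lemma card_Col0: "card (Col P 0) = (if sg_E P = {} then 1 else 0)"
proof -
  have sub: "Col P 0 \<subseteq> {\<lambda>_. 0}" by (auto simp: Col_def)
  show ?thesis
  proof (cases "sg_E P = {}")
    case True
    have "(\<lambda>_. 0) \<in> Col P 0" using True by (simp add: Col_def proper_col_def preserves_def)
    then have "Col P 0 = {\<lambda>_. 0}" using sub by blast
    then show ?thesis using True by simp
  next
    case False
    then obtain e where e: "e \<in> sg_E P" by blast
    have "(\<lambda>_. 0) \<notin> Col P 0"
    proof
      assume "(\<lambda>_. 0) \<in> Col P 0"
      then have "(0::int) \<noteq> sign_mult P e 0" using e unfolding Col_def proper_col_def by blast
      then show False by (cases "sg_pos P e") (auto simp: sign_mult_def)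
    qed
    then have "Col P 0 = {}" using sub by blast
    then show ?thesis using False by simp
  qed
qed

lemma sum_pow_card:
  fixes y :: "'a::comm_ring_1"
  shows "finite X \<Longrightarrow> (\<Sum>A\<in>Pow X. y ^ card A) = (1 + y) ^ card X"
proof (induction X rule: finite_induct)
  case empty
  then show ?case by simp
next
  case (insert x F)
  have inj: "inj_on (insert x) (Pow F)" using insert by (auto simp: inj_on_def) 
  have dis: "Pow F \<inter> insert x ` Pow F = {}" using insert by auto
  have c: "card (insert x A) = Suc (card A)" if "A \<in> Pow F" for A
  proof -
    have "finite A" "x \<notin> A" using that insert by (auto intro: finite_subset)
    then show ?thesis by simp
  qed
  have "(\<Sum>A\<in>Pow (insert x F). y ^ card A) = (\<Sum>A\<in>Pow F. y ^ card A) + (\<Sum>A\<in>insert x ` Pow F. y ^ card A)"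
    unfolding Pow_insert using insert dis by (simp add: sum.union_disjoint)
  also have "(\<Sum>A\<in>insert x ` Pow F. y ^ card A) = (\<Sum>A\<in>Pow F. y * y ^ card A)"
    apply (simp add: sum.reindex[OF inj])
    apply (rule sum.cong[OF refl])
    using c by simp
  also have "\<dots> = y * (1 + y) ^ card F" by (simp only: sum_distrib_left[symmetric] insert.IH)
  finally show ?case using insert by (simp add: algebra_simps)
qed

lemma sum_pow_toggle:
  fixes h :: "nat set \<Rightarrow> rat"
  assumes "finite S" "v \<in> S" "\<And>A. A \<subseteq> S - {v} \<Longrightarrow> h (insert v A) = - h A"
  shows "(\<Sum>A\<in>Pow S. h A) = 0"
proof -
  let ?F = "S - {v}"
  have S: "S = insert v ?F" using assms by auto
  have inj: "inj_on (insert v) (Pow ?F)" by (auto simp: inj_on_def)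
  have dis: "Pow ?F \<inter> insert v ` Pow ?F = {}" by auto
  have "(\<Sum>A\<in>Pow S. h A) = (\<Sum>A\<in>Pow ?F. h A) + (\<Sum>A\<in>insert v ` Pow ?F. h A)"
    by (subst S, unfold Pow_insert) (use assms dis in \<open>simp add: sum.union_disjoint\<close>)
  also have "(\<Sum>A\<in>insert v ` Pow ?F. h A) = (\<Sum>A\<in>Pow ?F. - h A)"
    apply (simp add: sum.reindex[OF inj])
    apply (rule sum.cong[OF refl])
    using assms(3) by auto
  finally show ?thesis by (simp add: sum_negf)
qed

lemma neg1_pow_diff: "k \<le> n \<Longrightarrow> (-1::rat) ^ (n - k) = (-1) ^ n * (-1) ^ k"
proof -
  assume "k \<le> n"
  then obtain d where n: "n = k + d" by (metis le_add_diff_inverse)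
  have "((-1::rat) ^ k) * (-1) ^ k = 1" by (simp flip: power_add)
  then show ?thesis by (simp add: n power_add)
qed

lemma sum_Sigma_fs:
  "finite X \<Longrightarrow> (\<forall>x\<in>X. finite (Y x)) \<Longrightarrow>
   (\<Sum>p\<in>Sigma X Y. g (fst p) (snd p)) = (\<Sum>x\<in>X. \<Sum>y\<in>Y x. g x y)"
  by (simp add: sum.Sigma case_prod_beta')

lemma finite_prs: "finite (sg_V P) \<Longrightarrow> finite (prs P)"
  unfolding prs_def sinkset_def srcset_def by (intro finite_SigmaI) auto

lemma sign_identity:
  assumes sp: "signed_poset P"
  shows "(\<Sum>p\<in>prs P. (-1::rat) ^ card (fst p) * (-1) ^ card (snd p)) =
         (if sg_E P = {} then (-1) ^ card (sg_V P) else 0)"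
proof -
  have fV: "finite (sg_V P)" using sp by (simp add: signed_poset_def oriented_signed_graph_def)
  let ?Sk = "sinkset P" and ?Sr = "srcset P"
  have fk: "finite ?Sk" and fr: "finite ?Sr" using fV by (auto simp: sinkset_def srcset_def)
  define h where "h = (\<lambda>A. (-1::rat) ^ card A * (if ?Sr \<subseteq> A then 1 else 0))"
  have "(\<Sum>p\<in>prs P. (-1::rat) ^ card (fst p) * (-1) ^ card (snd p)) =
        (\<Sum>A\<in>Pow ?Sk. \<Sum>B\<in>Pow (?Sr - A). (-1::rat) ^ card A * (-1) ^ card B)"
    unfolding prs_def using fk fr by (subst sum_Sigma_fs[where g="\<lambda>A B. (-1::rat) ^ card A * (-1) ^ card B"]) auto
  also have "\<dots> = (\<Sum>A\<in>Pow ?Sk. h A)"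
  proof (rule sum.cong[OF refl])
    fix A assume A: "A \<in> Pow ?Sk"
    have "(\<Sum>B\<in>Pow (?Sr - A). (-1::rat) ^ card A * (-1) ^ card B) =
          (-1) ^ card A * (\<Sum>B\<in>Pow (?Sr - A). (-1) ^ card B)" by (simp add: sum_distrib_left)
    also have "\<dots> = (-1) ^ card A * (1 + -1) ^ card (?Sr - A)"
      using fr by (subst sum_pow_card) auto
    also have "\<dots> = h A"
    proof -
      have e: "card (?Sr - A) = 0 \<longleftrightarrow> ?Sr \<subseteq> A" using fr by auto
      show ?thesis by (cases "?Sr \<subseteq> A") (use e in \<open>auto simp: h_def\<close>)
    qed
    finally show "(\<Sum>B\<in>Pow (?Sr - A). (-1::rat) ^ card A * (-1) ^ card B) = h A" .
  qed
  also have "\<dots> = (if sg_E P = {} then (-1) ^ card (sg_V P) else 0)"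
  proof (cases "sg_E P = {}")
    case True
    then have k: "?Sk = sg_V P" and r: "?Sr = sg_V P"
      by (auto simp: sinkset_def srcset_def is_sink_def is_source_def)
    have "(\<Sum>A\<in>Pow ?Sk. h A) = h (sg_V P) + (\<Sum>A\<in>Pow ?Sk - {sg_V P}. h A)"
      using fV k by (subst sum.remove[of _ "sg_V P"]) auto
    also have "(\<Sum>A\<in>Pow ?Sk - {sg_V P}. h A) = 0"
      using k r by (intro sum.neutral) (auto simp: h_def)
    finally show ?thesis using True by (simp add: h_def r)
  next
    case False
    obtain v where v: "v \<in> sg_V P" and
      vv: "(is_sink P v \<and> \<not> is_source P v) \<or> (is_source P v \<and> \<not> is_sink P v)"
      using exists_sink_xor_source[OF sp False] by blast
    show ?thesis
    proof (cases "is_sink P v")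
      case True
      then have vk: "v \<in> ?Sk" and vr: "v \<notin> ?Sr" using v vv by (auto simp: sinkset_def srcset_def)
      have "(\<Sum>A\<in>Pow ?Sk. h A) = 0"
      proof (rule sum_pow_toggle[OF fk vk])
        fix A assume "A \<subseteq> ?Sk - {v}"
        then have "v \<notin> A" "finite A" using fk by (auto intro: finite_subset)
        then show "h (insert v A) = - h A" using vr by (simp add: h_def subset_insert)
      qed
      then show ?thesis using False by simp
    next
      case False
      then have vk: "v \<notin> ?Sk" and vr: "v \<in> ?Sr" using v vv by (auto simp: sinkset_def srcset_def)
      have "(\<Sum>A\<in>Pow ?Sk. h A) = 0"
        using vk vr by (intro sum.neutral) (auto simp: h_def)
      then show ?thesis using \<open>sg_E P \<noteq> {}\<close> by simp
    qed
  qed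
  finally show ?thesis .
qed

lemma proper_at:
  assumes "proper_col P \<kappa>" "e \<in> sg_E P"
  shows "\<kappa> (endpt P e b) \<noteq> sign_mult P e (\<kappa> (endpt P e (\<not> b)))"
proof -
  have "\<kappa> (endpt P e False) \<noteq> sign_mult P e (\<kappa> (endpt P e True))"
    using assms unfolding proper_col_def by blast
  then show ?thesis by (cases b; cases "sg_pos P e") (auto simp: sign_mult_def)
qed

lemma pres_at:
  assumes "preserves P \<kappa>" "e \<in> sg_E P"
  shows "sg_arr P e b \<longleftrightarrow> \<kappa> (endpt P e b) > sign_mult P e (\<kappa> (endpt P e (\<not> b)))"
  using assms unfolding preserves_def by blast

lemma top_sink:
  assumes or: "oriented_signed_graph P" and c: "\<kappa> \<in> Col P k" and v: "v \<in> sg_V P" "\<kappa> v = k"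
  shows "v \<in> sinkset P"
proof -
  have "sg_arr P e b" if e: "e \<in> sg_E P" and eb: "endpt P e b = v" for e b
  proof -
    let ?u = "endpt P e (\<not> b)"
    have u: "?u \<in> sg_V P" using endpt_in_V[OF or e] .
    have bd: "\<bar>\<kappa> ?u\<bar> \<le> k" using c u by (auto simp: Col_def)
    have ne: "\<kappa> v \<noteq> sign_mult P e (\<kappa> ?u)" using proper_at[of P \<kappa> e b] c e eb by (auto simp: Col_def)
    have "sign_mult P e (\<kappa> ?u) \<le> k" using bd by (auto simp: sign_mult_def)
    then have "\<kappa> v > sign_mult P e (\<kappa> ?u)" using ne v by simp
    then show ?thesis using pres_at[of P \<kappa> e b] c e eb by (auto simp: Col_def)
  qed
  then show ?thesis using v by (auto simp: sinkset_def is_sink_def)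
qed

lemma bot_source:
  assumes or: "oriented_signed_graph P" and c: "\<kappa> \<in> Col P k" and v: "v \<in> sg_V P" "\<kappa> v = - k"
  shows "v \<in> srcset P"
proof -
  have "\<not> sg_arr P e b" if e: "e \<in> sg_E P" and eb: "endpt P e b = v" for e b
  proof -
    let ?u = "endpt P e (\<not> b)"
    have u: "?u \<in> sg_V P" using endpt_in_V[OF or e] .
    have bd: "\<bar>\<kappa> ?u\<bar> \<le> k" using c u by (auto simp: Col_def)
    have "sign_mult P e (\<kappa> ?u) \<ge> - k" using bd by (auto simp: sign_mult_def)
    then have "\<not> \<kappa> v > sign_mult P e (\<kappa> ?u)" using v by simp
    then show ?thesis using pres_at[of P \<kappa> e b] c e eb by (auto simp: Col_def)
  qed
  then show ?thesis using v by (auto simp: srcset_def is_source_def)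
qed

lemma rs_ok:
  assumes or: "oriented_signed_graph P" and c: "\<kappa> \<in> Col P k" and k: "k = int K + 1"
    and A: "A = {v\<in>sg_V P. \<kappa> v = k}" and B: "B = {v\<in>sg_V P. \<kappa> v = - k}"
  shows "(\<lambda>v. if v \<in> A \<union> B then 0 else \<kappa> v) \<in> Col (delv P (A \<union> B)) (int K)"
proof -
  let ?r = "\<lambda>v. if v \<in> A \<union> B then 0 else \<kappa> v"
  have z: "\<forall>v. v \<notin> sg_V (delv P (A \<union> B)) \<longrightarrow> ?r v = 0" using c by (auto simp: Col_def)
  have pc: "proper_col (delv P (A \<union> B)) ?r"
    unfolding proper_col_def
  proof
    fix e assume e: "e \<in> sg_E (delv P (A \<union> B))"
    then have e': "e \<in> sg_E P" by simp
    have "\<kappa> (endpt P e False) \<noteq> sign_mult P e (\<kappa> (endpt P e True))"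
      using c e' by (auto simp: Col_def proper_col_def)
    then show "?r (endpt (delv P (A \<union> B)) e False) \<noteq>
          sign_mult (delv P (A \<union> B)) e (?r (endpt (delv P (A \<union> B)) e True))"
      using e by simp
  qed
  have pr: "preserves (delv P (A \<union> B)) ?r"
    unfolding preserves_def
  proof (intro ballI allI)
    fix e b assume e: "e \<in> sg_E (delv P (A \<union> B))"
    then have e': "e \<in> sg_E P" by simp
    have "sg_arr P e b \<longleftrightarrow> \<kappa> (endpt P e b) > sign_mult P e (\<kappa> (endpt P e (\<not> b)))"
      using c e' pres_at by (auto simp: Col_def)
    moreover have "endpt P e b \<notin> A \<union> B" "endpt P e (\<not> b) \<notin> A \<union> B" using e by (cases b; simp)+
    ultimately show "sg_arr (delv P (A \<union> B)) e b =
       (sign_mult (delv P (A \<union> B)) e (?r (endpt (delv P (A \<union> B)) e (\<not> b))) < ?r (endpt (delv P (A \<union> B)) e b))"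
      by simp
  qed
  have bd: "\<forall>v\<in>sg_V (delv P (A \<union> B)). \<bar>?r v\<bar> \<le> int K"
  proof
    fix v assume v: "v \<in> sg_V (delv P (A \<union> B))"
    then have "\<bar>\<kappa> v\<bar> \<le> k" "\<kappa> v \<noteq> k" "\<kappa> v \<noteq> - k" using c A B by (auto simp: Col_def)
    then show "\<bar>?r v\<bar> \<le> int K" using v k by auto
  qed
  show ?thesis using z pc pr bd by (simp add: Col_def)
qed

lemma ext_ok:
  assumes or: "oriented_signed_graph P" and AS: "A \<subseteq> sinkset P" and BS: "B \<subseteq> srcset P"
    and AB: "A \<inter> B = {}" and k: "k = int K + 1"
    and c: "\<kappa>' \<in> Col (delv P (A \<union> B)) (int K)"
  shows "(\<lambda>v. if v \<in> A then k else if v \<in> B then - k else \<kappa>' v) \<in> Col P k"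
proof -
  define \<kappa> where "\<kappa> = (\<lambda>v. if v \<in> A then k else if v \<in> B then - k else \<kappa>' v)"
  have AV: "A \<subseteq> sg_V P" and BV: "B \<subseteq> sg_V P" using AS BS by (auto simp: sinkset_def srcset_def)
  have z: "\<forall>v. v \<notin> sg_V P \<longrightarrow> \<kappa> v = 0" using c AV BV by (auto simp: Col_def \<kappa>_def)
  have bd: "\<forall>v\<in>sg_V P. \<bar>\<kappa> v\<bar> \<le> k"
  proof
    fix v assume v: "v \<in> sg_V P"
    have "v \<notin> A \<Longrightarrow> v \<notin> B \<Longrightarrow> \<bar>\<kappa>' v\<bar> \<le> int K" using c v by (auto simp: Col_def)
    then show "\<bar>\<kappa> v\<bar> \<le> k" using k by (auto simp: \<kappa>_def)
  qed
  have edge: "\<kappa> (endpt P e False) \<noteq> sign_mult P e (\<kappa> (endpt P e True)) \<and>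
      (sg_arr P e False \<longleftrightarrow> \<kappa> (endpt P e False) > sign_mult P e (\<kappa> (endpt P e True))) \<and>
      (sg_arr P e True \<longleftrightarrow> \<kappa> (endpt P e True) > sign_mult P e (\<kappa> (endpt P e False)))"
    if e: "e \<in> sg_E P" for e
  proof -
    let ?u0 = "endpt P e False" and ?u1 = "endpt P e True"
    let ?x0 = "\<kappa> ?u0" and ?x1 = "\<kappa> ?u1"
    let ?a0 = "sg_arr P e False" and ?a1 = "sg_arr P e True"
    have u0: "?u0 \<in> sg_V P" and u1: "?u1 \<in> sg_V P" using endpt_in_V[OF or e] by auto
    have ori: "if sg_pos P e then ?a0 \<noteq> ?a1 else ?a0 = ?a1"
      using or e unfolding oriented_signed_graph_def by blast
    show ?thesis
    proof (cases "?u0 \<notin> A \<union> B \<and> ?u1 \<notin> A \<union> B")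
      case True
      then have eD: "e \<in> sg_E (delv P (A \<union> B))" using e by simp
      have "\<kappa>' ?u0 \<noteq> sign_mult P e (\<kappa>' ?u1)"
        using c eD by (auto simp: Col_def proper_col_def)
      moreover have "?a0 \<longleftrightarrow> \<kappa>' ?u0 > sign_mult P e (\<kappa>' ?u1)"
        using pres_at[of "delv P (A \<union> B)" \<kappa>' e False] c eD by (auto simp: Col_def)
      moreover have "?a1 \<longleftrightarrow> \<kappa>' ?u1 > sign_mult P e (\<kappa>' ?u0)"
        using pres_at[of "delv P (A \<union> B)" \<kappa>' e True] c eD by (auto simp: Col_def)
      ultimately show ?thesis using True by (simp add: \<kappa>_def)
    next
      case False
      have sA: "x \<in> A \<Longrightarrow> endpt P e b = x \<Longrightarrow> sg_arr P e b" for x b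
        using AS e by (auto simp: sinkset_def is_sink_def)
      have sB: "x \<in> B \<Longrightarrow> endpt P e b = x \<Longrightarrow> \<not> sg_arr P e b" for x b
        using BS e by (auto simp: srcset_def is_source_def)
      have f0: "(?u0 \<in> A \<and> ?a0 \<and> ?x0 = k) \<or> (?u0 \<in> B \<and> \<not> ?a0 \<and> ?x0 = - k) \<or>
                (?u0 \<notin> A \<and> ?u0 \<notin> B \<and> - (k - 1) \<le> ?x0 \<and> ?x0 \<le> k - 1)"
      proof -
        have "?u0 \<notin> A \<Longrightarrow> ?u0 \<notin> B \<Longrightarrow> \<bar>\<kappa>' ?u0\<bar> \<le> int K" using c u0 by (auto simp: Col_def)
        then show ?thesis using sA[of ?u0 False] sB[of ?u0 False] k AB by (auto simp: \<kappa>_def)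
      qed
      have f1: "(?u1 \<in> A \<and> ?a1 \<and> ?x1 = k) \<or> (?u1 \<in> B \<and> \<not> ?a1 \<and> ?x1 = - k) \<or>
                (?u1 \<notin> A \<and> ?u1 \<notin> B \<and> - (k - 1) \<le> ?x1 \<and> ?x1 \<le> k - 1)"
      proof -
        have "?u1 \<notin> A \<Longrightarrow> ?u1 \<notin> B \<Longrightarrow> \<bar>\<kappa>' ?u1\<bar> \<le> int K" using c u1 by (auto simp: Col_def)
        then show ?thesis using sA[of ?u1 True] sB[of ?u1 True] k AB by (auto simp: \<kappa>_def)
      qed
      have nr: "?u0 \<in> A \<or> ?u0 \<in> B \<or> ?u1 \<in> A \<or> ?u1 \<in> B" using False by blast
      have k1: "k \<ge> 1" using k by simp
      show ?thesis
      proof (cases "sg_pos P e")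
        case True
        then have "?a0 \<noteq> ?a1" using ori by simp
        then show ?thesis using f0 f1 nr k1 True by (simp add: sign_mult_def) linarith
      next
        case False
        then have "?a0 = ?a1" using ori by simp
        then show ?thesis using f0 f1 nr k1 False by (simp add: sign_mult_def) linarith
      qed
    qed
  qed
  have pc: "proper_col P \<kappa>" unfolding proper_col_def using edge by blast
  have pr: "preserves P \<kappa>" unfolding preserves_def
  proof (intro ballI allI)
    fix e b assume "e \<in> sg_E P"
    then show "sg_arr P e b = (sign_mult P e (\<kappa> (endpt P e (\<not> b))) < \<kappa> (endpt P e b))"
      using edge by (cases b) auto
  qed
  show ?thesis using z pc pr bd unfolding \<kappa>_def[symmetric] by (simp add: Col_def)
qed

lemma prs_props:
  assumes "p \<in> prs P"
  shows "fst p \<subseteq> sinkset P" "snd p \<subseteq> srcset P" "fst p \<inter> snd p = {}"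
    "fst p \<subseteq> sg_V P" "snd p \<subseteq> sg_V P"
  using assms by (auto simp: prs_def sinkset_def srcset_def)

lemma BL:
  assumes or: "oriented_signed_graph P" and k: "k = int K + 1"
  shows "WC P k a b = (\<Sum>p\<in>prs P. a ^ card (fst p) * b ^ card (snd p) *
            of_nat (card (Col (delv P (fst p \<union> snd p)) (int K))))"
proof -
  have fV: "finite (sg_V P)" using or by (simp add: oriented_signed_graph_def)
  define TB where "TB = (\<lambda>\<kappa>::nat\<Rightarrow>int. ({v\<in>sg_V P. \<kappa> v = k}, {v\<in>sg_V P. \<kappa> v = - k}))"
  have k1: "k \<ge> 1" using k by simp
  have TBin: "TB \<kappa> \<in> prs P" if c: "\<kappa> \<in> Col P k" for \<kappa>
  proof -
    have "fst (TB \<kappa>) \<subseteq> sinkset P" using top_sink[OF or c] by (auto simp: TB_def)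
    moreover have "snd (TB \<kappa>) \<subseteq> srcset P - fst (TB \<kappa>)" using bot_source[OF or c] k1
      by (auto simp: TB_def)
    ultimately show ?thesis by (auto simp: prs_def TB_def)
  qed
  have fib: "card {\<kappa>\<in>Col P k. TB \<kappa> = p} = card (Col (delv P (fst p \<union> snd p)) (int K))"
    if p: "p \<in> prs P" for p
  proof -
    obtain A B where pAB: "p = (A, B)" by fastforce
    have AS: "A \<subseteq> sinkset P" and BS: "B \<subseteq> srcset P" and AB: "A \<inter> B = {}"
      and AV: "A \<subseteq> sg_V P" and BV: "B \<subseteq> sg_V P"
      using prs_props[OF p] pAB by auto
    define rs where "rs = (\<lambda>\<kappa>::nat\<Rightarrow>int. \<lambda>v. if v \<in> A \<union> B then 0 else \<kappa> v)"
    define ex where "ex = (\<lambda>\<kappa>'::nat\<Rightarrow>int. \<lambda>v. if v \<in> A then k else if v \<in> B then - k else \<kappa>' v)"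
    let ?S = "{\<kappa>\<in>Col P k. TB \<kappa> = (A, B)}" and ?D = "Col (delv P (A \<union> B)) (int K)"
    have "bij_betw rs ?S ?D"
    proof (rule bij_betw_byWitness[where f'=ex])
      show "\<forall>\<kappa>\<in>?S. ex (rs \<kappa>) = \<kappa>"
      proof
        fix \<kappa> assume "\<kappa> \<in> ?S"
        then have "A = {v\<in>sg_V P. \<kappa> v = k}" "B = {v\<in>sg_V P. \<kappa> v = - k}" by (auto simp: TB_def)
        then show "ex (rs \<kappa>) = \<kappa>" by (auto simp: ex_def rs_def)
      qed
      show "\<forall>\<kappa>'\<in>?D. rs (ex \<kappa>') = \<kappa>'"
      proof
        fix \<kappa>' assume "\<kappa>' \<in> ?D"
        then have "\<forall>v. v \<in> A \<union> B \<longrightarrow> \<kappa>' v = 0" by (auto simp: Col_def)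
        then show "rs (ex \<kappa>') = \<kappa>'" by (auto simp: ex_def rs_def)
      qed
      show "rs ` ?S \<subseteq> ?D"
      proof
        fix x assume "x \<in> rs ` ?S"
        then obtain \<kappa> where \<kappa>: "\<kappa> \<in> ?S" and x: "x = rs \<kappa>" by blast
        then have "A = {v\<in>sg_V P. \<kappa> v = k}" "B = {v\<in>sg_V P. \<kappa> v = - k}" by (auto simp: TB_def)
        then show "x \<in> ?D" using rs_ok[OF or _ k, of \<kappa> A B] \<kappa> x by (simp add: rs_def)
      qed
      show "ex ` ?D \<subseteq> ?S"
      proof
        fix x assume "x \<in> ex ` ?D"
        then obtain \<kappa>' where c: "\<kappa>' \<in> ?D" and x: "x = ex \<kappa>'" by blast
        have xc: "x \<in> Col P k" using ext_ok[OF or AS BS AB k c] x by (simp add: ex_def)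
        have bd: "v \<in> sg_V P \<Longrightarrow> v \<notin> A \<Longrightarrow> v \<notin> B \<Longrightarrow> \<bar>\<kappa>' v\<bar> \<le> int K" for v
          using c by (auto simp: Col_def)
        have "{v\<in>sg_V P. x v = k} = A"
        proof (intro equalityI subsetI)
          fix v assume "v \<in> {v\<in>sg_V P. x v = k}"
          then show "v \<in> A" using bd[of v] k1 k by (auto simp: x ex_def split: if_splits)
        qed (use AV in \<open>auto simp: x ex_def\<close>)
        moreover have "{v\<in>sg_V P. x v = - k} = B"
        proof (intro equalityI subsetI)
          fix v assume "v \<in> {v\<in>sg_V P. x v = - k}"
          then show "v \<in> B" using bd[of v] k1 k by (auto simp: x ex_def split: if_splits)
        qed (use BV AB k1 in \<open>auto simp: x ex_def\<close>)
        ultimately show "x \<in> ?S" using xc by (simp add: TB_def)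
      qed
    qed
    then show ?thesis by (simp add: pAB bij_betw_same_card)
  qed
  have "WC P k a b = (\<Sum>\<kappa>\<in>Col P k. a ^ card (fst (TB \<kappa>)) * b ^ card (snd (TB \<kappa>)))"
    by (simp add: WC_def TB_def)
  also have "\<dots> = (\<Sum>p\<in>prs P. \<Sum>\<kappa>\<in>{\<kappa>\<in>Col P k. TB \<kappa> = p}. a ^ card (fst (TB \<kappa>)) * b ^ card (snd (TB \<kappa>)))"
    by (rule sum.group[symmetric]) (use finite_Col[OF fV] finite_prs[OF fV] TBin in auto)
  also have "\<dots> = (\<Sum>p\<in>prs P. of_nat (card {\<kappa>\<in>Col P k. TB \<kappa> = p}) * (a ^ card (fst p) * b ^ card (snd p)))"
  proof (rule sum.cong[OF refl])
    fix p assume "p \<in> prs P"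
    have "(\<Sum>\<kappa>\<in>{\<kappa>\<in>Col P k. TB \<kappa> = p}. a ^ card (fst (TB \<kappa>)) * b ^ card (snd (TB \<kappa>))) =
          (\<Sum>\<kappa>\<in>{\<kappa>\<in>Col P k. TB \<kappa> = p}. a ^ card (fst p) * b ^ card (snd p))"
      by (rule sum.cong) auto
    then show "(\<Sum>\<kappa>\<in>{\<kappa>\<in>Col P k. TB \<kappa> = p}. a ^ card (fst (TB \<kappa>)) * b ^ card (snd (TB \<kappa>))) =
          of_nat (card {\<kappa>\<in>Col P k. TB \<kappa> = p}) * (a ^ card (fst p) * b ^ card (snd p))"
      by simp
  qed
  also have "\<dots> = (\<Sum>p\<in>prs P. a ^ card (fst p) * b ^ card (snd p) *
            of_nat (card (Col (delv P (fst p \<union> snd p)) (int K))))"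
    by (rule sum.cong[OF refl]) (simp add: fib)
  finally show ?thesis .
qed

lemma card_rest:
  assumes "finite V" "A \<subseteq> V" "B \<subseteq> V" "A \<inter> B = {}"
  shows "card (V - (A \<union> B)) = card V - (card A + card B)" "card A + card B \<le> card V"
proof -
  have fA: "finite A" "finite B" using assms finite_subset by blast+
  have cu: "card (A \<union> B) = card A + card B" using fA assms by (simp add: card_Un_disjoint)
  show "card (V - (A \<union> B)) = card V - (card A + card B)"
    using assms cu by (simp add: card_Diff_subset fA)
  show "card A + card B \<le> card V" using cu assms card_mono[of V "A \<union> B"] by simp
qed

lemma Gh_Suc:
  assumes or: "oriented_signed_graph P"
  shows "Gh P a b (Suc K) = WC P (int K + 1) a b"
  by (simp add: Gh_def BL[OF or refl])

lemma WC_11: "finite (sg_V P) \<Longrightarrow> WC P k 1 1 = of_nat (card (Col P k))"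
  by (simp add: WC_def)

lemma Fh_step:
  assumes sp: "signed_poset P"
  shows "Fh P (Suc j) = Gh P 1 1 j"
proof (cases j)
  case 0
  have or: "oriented_signed_graph P" using sp by (simp add: signed_poset_def)
  have fV: "finite (sg_V P)" using or by (simp add: oriented_signed_graph_def)
  let ?n = "card (sg_V P)"
  have "Gh P 1 1 0 = (\<Sum>p\<in>prs P. (-1::rat) ^ card (sg_V P - (fst p \<union> snd p)))"
    by (simp add: Gh_def)
  also have "\<dots> = (\<Sum>p\<in>prs P. (-1) ^ ?n * ((-1::rat) ^ card (fst p) * (-1) ^ card (snd p)))"
  proof (rule sum.cong[OF refl])
    fix p assume p: "p \<in> prs P"
    note cr = card_rest[OF fV prs_props(4,5,3)[OF p]]
    show "(-1::rat) ^ card (sg_V P - (fst p \<union> snd p)) = (-1) ^ ?n * ((-1::rat) ^ card (fst p) * (-1) ^ card (snd p))"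
      unfolding cr(1) neg1_pow_diff[OF cr(2)] by (simp add: power_add)
  qed
  also have "\<dots> = (-1) ^ ?n * (if sg_E P = {} then (-1) ^ ?n else 0)"
    by (simp add: sum_distrib_left[symmetric] sign_identity[OF sp])
  also have "\<dots> = (if sg_E P = {} then 1 else 0)"
    by (simp flip: power_add)
  finally show ?thesis using 0 by (simp add: card_Col0)
next
  case (Suc K)
  have or: "oriented_signed_graph P" using sp by (simp add: signed_poset_def)
  have fV: "finite (sg_V P)" using or by (simp add: oriented_signed_graph_def)
  have "Fh P (Suc j) = WC P (int K + 1) 1 1" using Suc by (simp add: WC_11[OF fV] add.commute)
  also have "\<dots> = Gh P 1 1 j" using Suc Gh_Suc[OF or] by simp
  finally show ?thesis .
qed

lemma Gh_zero:
  assumes sp: "signed_poset P"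
  shows "Gh P s 0 0 = (-1) ^ card (sg_V P) * (1 - s) ^ num_sinks P"
proof -
  have or: "oriented_signed_graph P" using sp by (simp add: signed_poset_def)
  have fV: "finite (sg_V P)" using or by (simp add: oriented_signed_graph_def)
  let ?n = "card (sg_V P)" and ?Sk = "sinkset P" and ?Sr = "srcset P"
  have fk: "finite ?Sk" and fr: "finite ?Sr" using fV by (auto simp: sinkset_def srcset_def)
  define g where "g = (\<lambda>A B. s ^ card A * 0 ^ card B * Fh (delv P (A \<union> B)) 0)"
  have "Gh P s 0 0 = (\<Sum>A\<in>Pow ?Sk. \<Sum>B\<in>Pow (?Sr - A). g A B)"
    unfolding Gh_def prs_def g_def using fk fr by (subst sum_Sigma_fs) auto
  also have "\<dots> = (\<Sum>A\<in>Pow ?Sk. (-1) ^ ?n * (- s) ^ card A)"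
  proof (rule sum.cong[OF refl])
    fix A assume A: "A \<in> Pow ?Sk"
    have AV: "A \<subseteq> sg_V P" using A by (auto simp: sinkset_def)
    have "(\<Sum>B\<in>Pow (?Sr - A). g A B) = g A {} + (\<Sum>B\<in>Pow (?Sr - A) - {{}}. g A B)"
      using fr by (subst sum.remove[of _ "{}"]) auto
    also have "(\<Sum>B\<in>Pow (?Sr - A) - {{}}. g A B) = 0"
    proof (rule sum.neutral, rule ballI)
      fix B assume B: "B \<in> Pow (?Sr - A) - {{}}"
      then have "finite B" "B \<noteq> {}" using fr by (auto intro: finite_subset)
      then have "card B \<noteq> 0" by simp
      then show "g A B = 0" by (simp add: g_def)
    qed
    also have "g A {} = (-1) ^ ?n * (- s) ^ card A"
    proof -
      have "card A \<le> ?n" using AV fV card_mono by blast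
      moreover have "card (sg_V P - A) = ?n - card A" using AV fV by (simp add: card_Diff_subset finite_subset)
      ultimately show ?thesis
        by (simp add: g_def neg1_pow_diff power_mult_distrib[symmetric])
    qed
    finally show "(\<Sum>B\<in>Pow (?Sr - A). g A B) = (-1) ^ ?n * (- s) ^ card A" by simp
  qed
  also have "\<dots> = (-1) ^ ?n * (1 + - s) ^ card ?Sk"
    by (simp add: sum_distrib_left[symmetric] sum_pow_card[OF fk])
  finally show ?thesis by (simp add: num_sinks_def sinkset_def)
qed

definition Dif :: "(nat \<Rightarrow> rat) \<Rightarrow> nat \<Rightarrow> rat" where
  "Dif g = (\<lambda>j. g (Suc j) - g j)"

lemma Dpow_sum:
  "(Dif ^^ k) (\<lambda>j. \<Sum>i\<in>S. c i * f i j) = (\<lambda>j. \<Sum>i\<in>S. c i * (Dif ^^ k) (f i) j)"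
proof (induction k)
  case 0
  then show ?case by simp
next
  case (Suc k)
  have "(Dif ^^ Suc k) (\<lambda>j. \<Sum>i\<in>S. c i * f i j) = Dif ((Dif ^^ k) (\<lambda>j. \<Sum>i\<in>S. c i * f i j))"
    by simp
  also have "\<dots> = Dif (\<lambda>j. \<Sum>i\<in>S. c i * (Dif ^^ k) (f i) j)" using Suc by simp
  also have "\<dots> = (\<lambda>j. \<Sum>i\<in>S. c i * (Dif ^^ Suc k) (f i) j)"
    by (simp add: Dif_def sum_subtractf right_diff_distrib)
  finally show ?case .
qed

lemma Dpow_zero: "(Dif ^^ k) (\<lambda>_. 0) = (\<lambda>_. 0)"
  by (induction k) (simp_all add: Dif_def)

lemma Dpow_more:
  assumes "(Dif ^^ m) g = (\<lambda>_. 0)" "m \<le> n"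
  shows "(Dif ^^ n) g = (\<lambda>_. 0)"
proof -
  have "(Dif ^^ n) g = (Dif ^^ (n - m)) ((Dif ^^ m) g)"
    using assms(2) by (metis funpow_add le_add_diff_inverse2 comp_apply)
  then show ?thesis using assms(1) Dpow_zero by simp
qed

lemma Fh_annih:
  "signed_poset P \<Longrightarrow> (Dif ^^ (card (sg_V P) + 1)) (Fh P) = (\<lambda>_. 0)"
proof (induction "card (sg_V P)" arbitrary: P rule: less_induct)
  case less
  have sp: "signed_poset P" by fact
  have or: "oriented_signed_graph P" using sp by (simp add: signed_poset_def)
  have fV: "finite (sg_V P)" using or by (simp add: oriented_signed_graph_def)
  let ?n = "card (sg_V P)"
  let ?R = "prs P - {({}, {})}"
  have e0: "({}, {}) \<in> prs P" by (simp add: prs_def)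
  have fp: "finite (prs P)" using finite_prs[OF fV] .
  have DF: "Dif (Fh P) = (\<lambda>j. \<Sum>p\<in>?R. 1 * Fh (delv P (fst p \<union> snd p)) j)"
  proof
    fix j
    have "Fh P (Suc j) = Gh P 1 1 j" by (rule Fh_step[OF sp])
    also have "\<dots> = (\<Sum>p\<in>prs P. Fh (delv P (fst p \<union> snd p)) j)"
      by (simp add: Gh_def)
    also have "\<dots> = Fh P j + (\<Sum>p\<in>?R. Fh (delv P (fst p \<union> snd p)) j)"
      using fp e0 by (subst sum.remove[of _ "({}, {})"]) auto
    finally show "Dif (Fh P) j = (\<Sum>p\<in>?R. 1 * Fh (delv P (fst p \<union> snd p)) j)"
      by (simp add: Dif_def)
  qed
  have each: "(Dif ^^ ?n) (Fh (delv P (fst p \<union> snd p))) = (\<lambda>_. 0)" if p: "p \<in> ?R" for p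
  proof -
    have pp: "p \<in> prs P" using p by simp
    note cr = card_rest[OF fV prs_props(4,5,3)[OF pp]]
    have ne: "fst p \<union> snd p \<noteq> {}" using p by (cases p) auto
    have "finite (fst p \<union> snd p)" using prs_props(4,5)[OF pp] fV finite_subset by blast
    then have "card (fst p \<union> snd p) > 0" using ne by (simp add: card_gt_0_iff)
    moreover have "card (fst p \<union> snd p) \<le> card (fst p) + card (snd p)" by (rule card_Un_le)
    ultimately have lt: "card (sg_V (delv P (fst p \<union> snd p))) < ?n" using cr by simp
    have "(Dif ^^ (card (sg_V (delv P (fst p \<union> snd p))) + 1)) (Fh (delv P (fst p \<union> snd p))) = (\<lambda>_. 0)"
      using less(1)[OF lt] signed_poset_delv[OF sp] by blast
    then show ?thesis by (rule Dpow_more) (use lt in simp)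
  qed
  have "(Dif ^^ (?n + 1)) (Fh P) = (Dif ^^ ?n) (Dif (Fh P))"
    by (simp only: Suc_eq_plus1[symmetric] funpow_Suc_right comp_apply)
  also have "\<dots> = (\<lambda>j. \<Sum>p\<in>?R. 1 * (Dif ^^ ?n) (Fh (delv P (fst p \<union> snd p))) j)"
    unfolding DF by (rule Dpow_sum)
  also have "\<dots> = (\<lambda>_. 0)" using each by simp
  finally show ?case .
qed

lemma Gh_annih:
  assumes sp: "signed_poset P"
  shows "(Dif ^^ (card (sg_V P) + 1)) (Gh P a b) = (\<lambda>_. 0)"
proof -
  have or: "oriented_signed_graph P" using sp by (simp add: signed_poset_def)
  have fV: "finite (sg_V P)" using or by (simp add: oriented_signed_graph_def)
  let ?n = "card (sg_V P)"
  have "Gh P a b = (\<lambda>j. \<Sum>p\<in>prs P. (a ^ card (fst p) * b ^ card (snd p)) * Fh (delv P (fst p \<union> snd p)) j)"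
    by (simp add: Gh_def[abs_def])
  then have "(Dif ^^ (?n + 1)) (Gh P a b) =
     (\<lambda>j. \<Sum>p\<in>prs P. (a ^ card (fst p) * b ^ card (snd p)) * (Dif ^^ (?n + 1)) (Fh (delv P (fst p \<union> snd p))) j)"
    by (simp only: Dpow_sum)
  also have "\<dots> = (\<lambda>_. 0)"
  proof -
    have "(Dif ^^ (?n + 1)) (Fh (delv P (fst p \<union> snd p))) = (\<lambda>_. 0)" if pp: "p \<in> prs P" for p
    proof -
      note cr = card_rest[OF fV prs_props(4,5,3)[OF pp]]
      have "(Dif ^^ (card (sg_V (delv P (fst p \<union> snd p))) + 1)) (Fh (delv P (fst p \<union> snd p))) = (\<lambda>_. 0)"
        using Fh_annih signed_poset_delv[OF sp] by blast
      then show ?thesis by (rule Dpow_more) (use cr in simp)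
    qed
    then show ?thesis by simp
  qed
  finally show ?thesis .
qed

lemma extrap:
  "(Dif ^^ k) g = (\<lambda>_. 0) \<Longrightarrow> (\<forall>j. g (Suc j) = c) \<Longrightarrow> g 0 = c"
proof (induction k arbitrary: g c)
  case 0
  then show ?case by (metis funpow_0)
next
  case (Suc k)
  have "(Dif ^^ Suc k) g = (Dif ^^ k) (Dif g)" by (simp only: funpow_Suc_right comp_apply)
  then have "(Dif ^^ k) (Dif g) = (\<lambda>_. 0)" using Suc.prems(1) by simp
  moreover have "\<forall>j. Dif g (Suc j) = 0" using Suc.prems(2) by (simp add: Dif_def)
  ultimately have "Dif g 0 = 0" using Suc.IH by blast
  then show ?case using Suc.prems(2) by (simp add: Dif_def)
qed

definition Ev :: "nat \<Rightarrow> int \<Rightarrow> rat \<Rightarrow> rat \<Rightarrow> (int multiset \<Rightarrow> rat) \<Rightarrow> rat" where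
  "Ev n k a b f = (\<Sum>m\<in>multisets_of_size {-k..k} n. f m * (a ^ count m k * b ^ count m (- k)))"

lemma count_img:
  "finite V \<Longrightarrow> count (image_mset \<kappa> (mset_set V)) c = card {v\<in>V. \<kappa> v = c}"
proof -
  assume f: "finite V"
  have "count (image_mset \<kappa> (mset_set V)) c = (\<Sum>y\<in>\<kappa> -` {c} \<inter> V. 1)"
    unfolding count_image_mset using f by (intro sum.cong) auto
  also have "\<kappa> -` {c} \<inter> V = {v\<in>V. \<kappa> v = c}" by auto
  finally show ?thesis by simp
qed

lemma Ev_Y:
  assumes or: "oriented_signed_graph P" and n: "card (sg_V P) = n"
  shows "Ev n k a b (Ycoeff P) = WC P k a b"
proof -
  have fV: "finite (sg_V P)" using or by (simp add: oriented_signed_graph_def)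
  define img where "img = (\<lambda>\<kappa>::nat\<Rightarrow>int. image_mset \<kappa> (mset_set (sg_V P)))"
  let ?MS = "multisets_of_size {-k..k} n"
  define w where "w = (\<lambda>m. a ^ count m k * b ^ count m (- k))"
  have fMS: "finite ?MS" by (rule finite_multisets_of_size) simp
  have fib: "{\<kappa>. (\<forall>v. v \<notin> sg_V P \<longrightarrow> \<kappa> v = 0) \<and> proper_col P \<kappa> \<and> preserves P \<kappa> \<and> img \<kappa> = m}
       = {\<kappa>\<in>Col P k. img \<kappa> = m}" if m: "m \<in> ?MS" for m
  proof -
    have "\<bar>\<kappa> v\<bar> \<le> k" if "img \<kappa> = m" "v \<in> sg_V P" for \<kappa> v
    proof -
      have "\<kappa> v \<in># img \<kappa>" using that(2) fV by (simp add: img_def)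
      then have "\<kappa> v \<in># m" using that(1) by simp
      then have "\<kappa> v \<in> {-k..k}" using m by (auto simp: multisets_of_size_def)
      then show ?thesis by auto
    qed
    then show ?thesis by (auto simp: Col_def)
  qed
  have imgin: "img \<kappa> \<in> ?MS" if "\<kappa> \<in> Col P k" for \<kappa>
    using that fV n by (auto simp: multisets_of_size_def img_def Col_def abs_le_iff)
  have "Ev n k a b (Ycoeff P) = (\<Sum>m\<in>?MS. of_nat (card {\<kappa>\<in>Col P k. img \<kappa> = m}) * w m)"
    unfolding Ev_def w_def Ycoeff_def
    by (rule sum.cong[OF refl]) (simp add: fib[unfolded img_def] img_def)
  also have "\<dots> = (\<Sum>m\<in>?MS. \<Sum>\<kappa>\<in>{\<kappa>\<in>Col P k. img \<kappa> = m}. w (img \<kappa>))"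
    by (rule sum.cong[OF refl]) simp
  also have "\<dots> = (\<Sum>\<kappa>\<in>Col P k. w (img \<kappa>))"
    by (rule sum.group) (use finite_Col[OF fV] fMS imgin in auto)
  also have "\<dots> = WC P k a b"
    unfolding WC_def w_def img_def by (simp add: count_img[OF fV])
  finally show ?thesis .
qed

lemma Ev_Y_other:
  assumes or: "oriented_signed_graph P" and n: "card (sg_V P) \<noteq> n"
  shows "Ev n k a b (Ycoeff P) = 0"
proof -
  have fV: "finite (sg_V P)" using or by (simp add: oriented_signed_graph_def)
  have "Ycoeff P m = 0" if "m \<in> multisets_of_size {-k..k} n" for m
  proof -
    have "size m = n" using that by (simp add: multisets_of_size_def)
    then have "\<forall>\<kappa>::nat\<Rightarrow>int. image_mset \<kappa> (mset_set (sg_V P)) \<noteq> m"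
      using n by (metis size_image_mset size_mset_set)
    then have E: "{\<kappa>. (\<forall>v. v \<notin> sg_V P \<longrightarrow> \<kappa> v = 0) \<and> proper_col P \<kappa> \<and> preserves P \<kappa> \<and>
        image_mset \<kappa> (mset_set (sg_V P)) = m} = {}" by auto
    show ?thesis unfolding Ycoeff_def E by simp
  qed
  then show ?thesis by (simp add: Ev_def)
qed

lemma Ev_x0:
  assumes "k \<ge> 1"
  shows "Ev n k a b x0_coeff = (if n = 1 then 1 else 0)"
proof -
  have fMS: "finite (multisets_of_size {-k..k} n)" by (rule finite_multisets_of_size) simp
  have "Ev n k a b x0_coeff = (\<Sum>m\<in>multisets_of_size {-k..k} n.
      if m = {#0#} then a ^ count {#0::int#} k * b ^ count {#0::int#} (- k) else 0)"
    unfolding Ev_def x0_coeff_def by (rule sum.cong) auto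
  also have "\<dots> = (if {#0#} \<in> multisets_of_size {-k..k} n then a ^ count {#0::int#} k * b ^ count {#0::int#} (- k) else 0)"
    using fMS by simp
  also have "\<dots> = (if n = 1 then 1 else 0)"
    using assms by (auto simp: multisets_of_size_def)
  finally show ?thesis .
qed

lemma Ev_lin:
  "Ev n k a b (\<lambda>m. \<Sum>i\<in>I. c i * Y i m) = (\<Sum>i\<in>I. c i * Ev n k a b (Y i))"
proof -
  let ?M = "multisets_of_size {-k..k} n"
  let ?w = "\<lambda>m. a ^ count m k * b ^ count m (- k)"
  have "Ev n k a b (\<lambda>m. \<Sum>i\<in>I. c i * Y i m) = (\<Sum>m\<in>?M. \<Sum>i\<in>I. c i * (Y i m * ?w m))"
    unfolding Ev_def by (rule sum.cong[OF refl]) (simp add: sum_distrib_right mult.assoc)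
  also have "\<dots> = (\<Sum>i\<in>I. \<Sum>m\<in>?M. c i * (Y i m * ?w m))" by (rule sum.swap)
  also have "\<dots> = (\<Sum>i\<in>I. c i * Ev n k a b (Y i))"
    unfolding Ev_def by (rule sum.cong[OF refl]) (simp add: sum_distrib_left)
  finally show ?thesis .
qed

lemma part2:
  fixes I :: "nat set" and Q :: "nat \<Rightarrow> sgo" and c :: "nat \<Rightarrow> rat"
  assumes fI: "finite I" and sp: "\<forall>i\<in>I. signed_poset (Q i)"
    and rel: "\<forall>m. (\<Sum>i\<in>I. c i * Ycoeff (Q i) m) = x0_coeff m"
  shows "(\<Sum>i\<in>I. smult (c i) (monom 1 (num_sinks (Q i)))) = - 1"
proof -
  have or: "oriented_signed_graph (Q i)" if "i \<in> I" for i
    using sp that by (simp add: signed_poset_def)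
  let ?nv = "\<lambda>i. card (sg_V (Q i))"
  have pv: "poly (\<Sum>i\<in>I. smult (c i) (monom 1 (num_sinks (Q i)))) x = poly (- 1) x" for x
  proof -
    define s where "s = 1 - x"
    define h where "h = (\<lambda>n j. \<Sum>i\<in>{i\<in>I. ?nv i = n}. c i * Gh (Q i) s 0 j)"
    have hz: "h n 0 = (if n = 1 then 1 else 0)" for n
    proof -
      have "(Dif ^^ (n+1)) (h n) = (\<lambda>j. \<Sum>i\<in>{i\<in>I. ?nv i = n}. c i * (Dif ^^ (n+1)) (Gh (Q i) s 0) j)"
        unfolding h_def by (rule Dpow_sum)
      also have "\<dots> = (\<lambda>_. 0)"
      proof -
        have "(Dif ^^ (n+1)) (Gh (Q i) s 0) = (\<lambda>_. 0)" if "i \<in> {i\<in>I. ?nv i = n}" for i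
          using Gh_annih[of "Q i" s 0] sp that by auto
        then show ?thesis by simp
      qed
      finally have A: "(Dif ^^ (n+1)) (h n) = (\<lambda>_. 0)" .
      have B: "\<forall>j. h n (Suc j) = (if n = 1 then 1 else 0)"
      proof
        fix j
        let ?k = "int j + 1"
        have "h n (Suc j) = (\<Sum>i\<in>{i\<in>I. ?nv i = n}. c i * Ev n ?k s 0 (Ycoeff (Q i)))"
          unfolding h_def
          by (rule sum.cong[OF refl]) (simp add: Gh_Suc[OF or] Ev_Y[OF or])
        also have "\<dots> = (\<Sum>i\<in>I. c i * Ev n ?k s 0 (Ycoeff (Q i)))"
          by (rule sum.mono_neutral_left) (use fI Ev_Y_other[OF or] in auto)
        also have "\<dots> = Ev n ?k s 0 (\<lambda>m. \<Sum>i\<in>I. c i * Ycoeff (Q i) m)"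
          by (rule Ev_lin[symmetric])
        also have "\<dots> = Ev n ?k s 0 x0_coeff" using rel by simp
        also have "\<dots> = (if n = 1 then 1 else 0)" by (rule Ev_x0) simp
        finally show "h n (Suc j) = (if n = 1 then 1 else 0)" .
      qed
      show ?thesis using extrap[OF A B] .
    qed
    have hz': "(\<Sum>i\<in>{i\<in>I. ?nv i = n}. c i * x ^ num_sinks (Q i)) = - (if n = 1 then 1 else 0)" for n
    proof -
      have "h n 0 = (\<Sum>i\<in>{i\<in>I. ?nv i = n}. c i * ((-1) ^ n * x ^ num_sinks (Q i)))"
        unfolding h_def by (rule sum.cong[OF refl]) (use sp in \<open>auto simp: Gh_zero s_def\<close>)
      also have "\<dots> = (-1) ^ n * (\<Sum>i\<in>{i\<in>I. ?nv i = n}. c i * x ^ num_sinks (Q i))"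
        by (simp add: sum_distrib_left mult.left_commute)
      finally have "(-1) ^ n * (\<Sum>i\<in>{i\<in>I. ?nv i = n}. c i * x ^ num_sinks (Q i)) = (if n = 1 then 1 else 0)"
        using hz by simp
      then show ?thesis by (cases "n = 1") auto
    qed
    let ?N = "?nv ` I \<union> {1}"
    have "poly (\<Sum>i\<in>I. smult (c i) (monom 1 (num_sinks (Q i)))) x = (\<Sum>i\<in>I. c i * x ^ num_sinks (Q i))"
      by (simp add: poly_sum poly_monom)
    also have "\<dots> = (\<Sum>n\<in>?N. \<Sum>i\<in>{i\<in>I. ?nv i = n}. c i * x ^ num_sinks (Q i))"
      by (rule sum.group[symmetric]) (use fI in auto)
    also have "\<dots> = (\<Sum>n\<in>?N. - (if n = 1 then 1 else 0))" by (simp only: hz')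
    also have "\<dots> = -1" using fI by (simp add: sum_negf)
    finally show ?thesis by simp
  qed
  have "poly (\<Sum>i\<in>I. smult (c i) (monom 1 (num_sinks (Q i)))) = poly (- 1)"
    using pv by (rule ext)
  then show ?thesis using poly_eq_poly_eq_iff by blast
qed

lemma single_Y:
  assumes V: "sg_V Q = {0}"
  shows "Ycoeff Q m = (if \<exists>c. m = {#c#} \<and> proper_col Q (\<lambda>v. if v = 0 then c else 0)
                          \<and> preserves Q (\<lambda>v. if v = 0 then c else 0) then 1 else 0)"
proof -
  let ?S = "{\<kappa>. (\<forall>v. v \<notin> sg_V Q \<longrightarrow> \<kappa> v = 0) \<and> proper_col Q \<kappa> \<and> preserves Q \<kappa> \<and>
        image_mset \<kappa> (mset_set (sg_V Q)) = m}"
  have eqf: "\<kappa> = (\<lambda>v. if v = 0 then \<kappa> 0 else 0)" if "\<forall>v. v \<notin> sg_V Q \<longrightarrow> \<kappa> v = 0" for \<kappa> :: "nat \<Rightarrow> int"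
  proof (rule ext)
    fix v show "\<kappa> v = (if v = 0 then \<kappa> 0 else 0)" using that V by (cases "v = 0") auto
  qed
  show ?thesis
  proof (cases "\<exists>c. m = {#c#} \<and> proper_col Q (\<lambda>v. if v = 0 then c else 0)
                          \<and> preserves Q (\<lambda>v. if v = 0 then c else 0)")
    case True
    then obtain c where c: "m = {#c#}" "proper_col Q (\<lambda>v. if v = 0 then c else 0)"
      "preserves Q (\<lambda>v. if v = 0 then c else 0)" by blast
    have "?S = {\<lambda>v. if v = 0 then c else 0}"
    proof (intro equalityI subsetI)
      fix \<kappa> assume k: "\<kappa> \<in> ?S"
      then have "\<kappa> 0 = c" using V c by simp
      then show "\<kappa> \<in> {\<lambda>v. if v = 0 then c else 0}" using eqf[of \<kappa>] k by auto
    qed (use V c in auto)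
    then show ?thesis using True by (simp add: Ycoeff_def)
  next
    case False
    have E: "?S = {}"
    proof (intro equalityI subsetI)
      fix \<kappa> assume k: "\<kappa> \<in> ?S"
      then have "m = {#\<kappa> 0#}" using V by simp
      moreover have "\<kappa> = (\<lambda>v. if v = 0 then \<kappa> 0 else 0)" using eqf[of \<kappa>] k by auto
      ultimately have "m = {#\<kappa> 0#} \<and> proper_col Q (\<lambda>v. if v = 0 then \<kappa> 0 else 0)
                          \<and> preserves Q (\<lambda>v. if v = 0 then \<kappa> 0 else 0)" using k by auto
      then show "\<kappa> \<in> {}" using False by blast
    qed simp
    show ?thesis using False unfolding Ycoeff_def E by simp
  qed
qed

definition Q0 :: sgo where "Q0 = ({0}, {}, \<lambda>_. (0, 0), \<lambda>_. True, \<lambda>_ _. True)"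
definition Q1 :: sgo where "Q1 = ({0}, {0}, \<lambda>_. (0, 0), \<lambda>_. False, \<lambda>_ _. True)"
definition Q2 :: sgo where "Q2 = ({0}, {0}, \<lambda>_. (0, 0), \<lambda>_. False, \<lambda>_ _. False)"

lemmas sg_defs = sg_V_def sg_E_def sg_ends_def sg_pos_def sg_arr_def

lemma Y0: "Ycoeff Q0 m = (if \<exists>c. m = {#c#} then 1 else 0)"
  by (subst single_Y) (simp_all add: Q0_def sg_defs proper_col_def preserves_def)

lemma Y1: "Ycoeff Q1 m = (if \<exists>c. m = {#c#} \<and> c > 0 then 1 else 0)"
proof -
  have "proper_col Q1 (\<lambda>v. if v = 0 then c else 0) \<and> preserves Q1 (\<lambda>v. if v = 0 then c else 0) \<longleftrightarrow> c > 0" for c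
    by (auto simp: Q1_def sg_defs proper_col_def preserves_def endpt_def sign_mult_def)
  then show ?thesis by (subst single_Y) (simp_all add: Q1_def sg_defs)
qed

lemma Y2: "Ycoeff Q2 m = (if \<exists>c. m = {#c#} \<and> c < 0 then 1 else 0)"
proof -
  have "proper_col Q2 (\<lambda>v. if v = 0 then c else 0) \<and> preserves Q2 (\<lambda>v. if v = 0 then c else 0) \<longleftrightarrow> c < 0" for c
    by (auto simp: Q2_def sg_defs proper_col_def preserves_def endpt_def sign_mult_def)
  then show ?thesis by (subst single_Y) (simp_all add: Q2_def sg_defs)
qed

lemma sp_Q0: "signed_poset Q0"
proof -
  have "\<not> is_cycle Q0 vs es" for vs es
  proof
    assume "is_cycle Q0 vs es"
    then have "es \<noteq> []" "es ! 0 \<in> sg_E Q0" by (auto simp: is_cycle_def closed_walk_def)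
    then show False by (simp add: Q0_def sg_defs)
  qed
  then show ?thesis by (auto simp: signed_poset_def oriented_signed_graph_def Q0_def sg_defs)
qed

lemma sp_Q1: "signed_poset Q1"
proof -
  have "\<not> is_cycle Q1 vs es" for vs es
  proof
    assume c: "is_cycle Q1 vs es"
    then have "vs \<noteq> []" by (auto simp: is_cycle_def closed_walk_def)
    then have "vs ! 0 \<in> set vs" by simp
    then have "\<exists>e\<in>set es. \<exists>b. endpt Q1 e b = vs ! 0 \<and> \<not> sg_arr Q1 e b"
      using c unfolding is_cycle_def by blast
    then show False by (simp add: Q1_def sg_defs)
  qed
  then show ?thesis by (auto simp: signed_poset_def oriented_signed_graph_def Q1_def sg_defs endpt_def)
qed

lemma sp_Q2: "signed_poset Q2"
proof -
  have "\<not> is_cycle Q2 vs es" for vs es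
  proof
    assume c: "is_cycle Q2 vs es"
    then have "vs \<noteq> []" by (auto simp: is_cycle_def closed_walk_def)
    then have "vs ! 0 \<in> set vs" by simp
    then have "\<exists>e\<in>set es. \<exists>b. endpt Q2 e b = vs ! 0 \<and> sg_arr Q2 e b"
      using c unfolding is_cycle_def by blast
    then show False by (simp add: Q2_def sg_defs)
  qed
  then show ?thesis by (auto simp: signed_poset_def oriented_signed_graph_def Q2_def sg_defs endpt_def)
qed

lemma part1:
  "\<exists>(I::nat set) (Q::nat \<Rightarrow> sgo) (c::nat \<Rightarrow> rat). finite I \<and> (\<forall>i\<in>I. signed_poset (Q i)) \<and>
            (\<forall>m. (\<Sum>i\<in>I. c i * Ycoeff (Q i) m) = x0_coeff m)"
proof (intro exI conjI)
  let ?Q = "\<lambda>i::nat. if i = 0 then Q0 else if i = 1 then Q1 else Q2"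
  let ?c = "\<lambda>i::nat. if i = 0 then (1::rat) else -1"
  show "finite {0::nat, 1, 2}" by simp
  show "\<forall>i\<in>{0::nat, 1, 2}. signed_poset (?Q i)" using sp_Q0 sp_Q1 sp_Q2 by auto
  show "\<forall>m. (\<Sum>i\<in>{0::nat, 1, 2}. ?c i * Ycoeff (?Q i) m) = x0_coeff m"
  proof
    fix m
    have "(\<Sum>i\<in>{0::nat, 1, 2}. ?c i * Ycoeff (?Q i) m) = Ycoeff Q0 m - Ycoeff Q1 m - Ycoeff Q2 m"
      by simp
    also have "\<dots> = x0_coeff m"
    proof (cases "\<exists>c. m = {#c#}")
      case True
      then obtain c where m: "m = {#c#}" by blast
      show ?thesis unfolding Y0 Y1 Y2 x0_coeff_def m by auto
    next
      case False
      then have "m \<noteq> {#0#}" by blast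
      then show ?thesis unfolding Y0 Y1 Y2 x0_coeff_def using False by auto
    qed
    finally show "(\<Sum>i\<in>{0::nat, 1, 2}. ?c i * Ycoeff (?Q i) m) = x0_coeff m" .
  qed
qed

theorem lemma6p8:
  shows "(\<exists>(I::nat set) (Q::nat \<Rightarrow> sgo) (c::nat \<Rightarrow> rat). finite I \<and> (\<forall>i\<in>I. signed_poset (Q i)) \<and>
            (\<forall>m. (\<Sum>i\<in>I. c i * Ycoeff (Q i) m) = x0_coeff m))
       \<and> (\<forall>(I::nat set) (Q::nat \<Rightarrow> sgo) (c::nat \<Rightarrow> rat).
            finite I \<and> (\<forall>i\<in>I. signed_poset (Q i)) \<and>
            (\<forall>m. (\<Sum>i\<in>I. c i * Ycoeff (Q i) m) = x0_coeff m)
            \<longrightarrow> (\<Sum>i\<in>I. smult (c i) (monom 1 (num_sinks (Q i)))) = - 1)"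
  using part1 part2 by blast

end
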